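(* Let $X^+$ be a one-sided subshift whose natural extension $\tilde X$ is infinite and minimal. Then the eventually Markov part $\tilde X_M$ of $\tilde X$ is empty.
   Context: Let $\mathcal A$ be a finite alphabet and $\sigma$ the shift, $(\sigma x)_i=x_{i+1}$. A one-sided subshift is a nonempty closed $\sigma$-invariant $X^+\subseteq\mathcal A^{\mathbb N}$; its natural extension is $\tilde X=\{x\in\mathcal A^{\mathbb Z}: x_px_{p+1}\dots\in X^+ \text{ for all } p\in\mathbb Z\}$ with the shift. For a block $a_{-n}\dots a_0$ occurring in $\tilde X$, $\mathrm{fol}(a_{-n}\dots a_0)=\{b_0b_1\dots\in X^+:\exists b\in\tilde X \text{ with } b_{-n}\dots b_0=a_{-n}\dots a_0\}$. A point $a\in\tilde X$ is eventually Markov at time $p\in\mathbb Z$ if there is $N$ such that $\mathrm{fol}(a_{p-n}\dots a_p)=\mathrm{fol}(a_{p-N}\dots a_p)$ for all $n\ge N$. The eventually Markov part $\tilde X_M$ is the set of $a\in\tilde X$ that are eventually Markov at every time $p\in\mathbb Z$. A system is minimal if every orbit is dense. *)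

theory Defs
  imports Main
begin

text \<open>Alphabet: a finite type 'a. One-sided sequences: nat \<Rightarrow> 'a; two-sided: int \<Rightarrow> 'a.
  Topology: product of discrete topologies; closedness written out via finite prefixes.\<close>

definition seq_closed :: "(nat \<Rightarrow> 'a) set \<Rightarrow> bool" where
  "seq_closed X \<longleftrightarrow> (\<forall>x. (\<forall>n. \<exists>y\<in>X. \<forall>i<n. y i = x i) \<longrightarrow> x \<in> X)"

definition one_sided_subshift :: "(nat \<Rightarrow> 'a::finite) set \<Rightarrow> bool" where
  "one_sided_subshift X \<longleftrightarrow> X \<noteq> {} \<and> seq_closed X \<and> (\<forall>x\<in>X. (\<lambda>i. x (Suc i)) \<in> X)"

definition natural_extension :: "(nat \<Rightarrow> 'a) set \<Rightarrow> (int \<Rightarrow> 'a) set" where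
  "natural_extension X = {x. \<forall>p::int. (\<lambda>i::nat. x (p + int i)) \<in> X}"

text \<open>Minimality of the two-sided shift on Y: every orbit is dense (in the product topology).\<close>
definition minimal_two_sided :: "(int \<Rightarrow> 'a) set \<Rightarrow> bool" where
  "minimal_two_sided Y \<longleftrightarrow>
     (\<forall>x\<in>Y. \<forall>y\<in>Y. \<forall>n::nat. \<exists>k::int. \<forall>j::int. \<bar>j\<bar> \<le> int n \<longrightarrow> x (j + k) = y j)"

text \<open>fol of a block w = w_0 ... w_m, read as positions -m..0.\<close>
definition fol :: "(nat \<Rightarrow> 'a) set \<Rightarrow> 'a list \<Rightarrow> (nat \<Rightarrow> 'a) set" where
  "fol X w = {(\<lambda>i::nat. c (int i)) | c. c \<in> natural_extension X \<and>
      (\<forall>j<length w. c (int j - (int (length w) - 1)) = w ! j)}"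

definition block :: "(int \<Rightarrow> 'a) \<Rightarrow> int \<Rightarrow> nat \<Rightarrow> 'a list" where
  "block a p n = map (\<lambda>j. a (p - int n + int j)) [0..<Suc n]"

definition eventually_markov_at :: "(nat \<Rightarrow> 'a) set \<Rightarrow> (int \<Rightarrow> 'a) \<Rightarrow> int \<Rightarrow> bool" where
  "eventually_markov_at X a p \<longleftrightarrow>
     (\<exists>N. \<forall>n\<ge>N. fol X (block a p n) = fol X (block a p N))"

definition eventually_markov_part :: "(nat \<Rightarrow> 'a) set \<Rightarrow> (int \<Rightarrow> 'a) set" where
  "eventually_markov_part X = {a \<in> natural_extension X. \<forall>p. eventually_markov_at X a p}"

end

theory Submission
  imports Defs "HOL-Library.Infinite_Set"
begin

lemma cluster:
  fixes f :: "nat \<Rightarrow> int \<Rightarrow> 'a::finite"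
  shows "\<exists>b. \<forall>n m. \<exists>k\<ge>m. \<forall>j. \<bar>j\<bar> \<le> int n \<longrightarrow> b j = f k j"
proof -
  define W where "W n k = map (f k) [-int n..int n]" for n k
  have WE: "f k j = f k' j" if "W n k = W n k'" "\<bar>j\<bar> \<le> int n" for n k k' j
    using that unfolding W_def map_eq_conv by (auto simp: abs_le_iff)
  have finW: "finite (W n ` K)" for n K
  proof -
    have "W n ` K \<subseteq> {xs. set xs \<subseteq> UNIV \<and> length xs = length [-int n..int n]}"
      by (auto simp: W_def)
    moreover have "finite {xs. set xs \<subseteq> (UNIV::'a set) \<and> length xs = length [-int n..int n]}"
      by (rule finite_lists_length_eq) simp
    ultimately show ?thesis by (rule finite_subset)
  qed
  define sel where "sel K n = (SOME K'. K' \<subseteq> K \<and> infinite K' \<and> (\<forall>k\<in>K'. \<forall>k'\<in>K'. W n k = W n k'))" for K :: "nat set" and n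
  have sel: "sel K n \<subseteq> K \<and> infinite (sel K n) \<and> (\<forall>k\<in>sel K n. \<forall>k'\<in>sel K n. W n k = W n k')"
    if iK: "infinite K" for K n
  proof -
    obtain a0 where "a0 \<in> K" "infinite {a \<in> K. W n a = W n a0}"
      using pigeonhole_infinite[OF iK finW[of n K]] by blast
    hence "\<exists>K'. K' \<subseteq> K \<and> infinite K' \<and> (\<forall>k\<in>K'. \<forall>k'\<in>K'. W n k = W n k')"
      by (intro exI[of _ "{a \<in> K. W n a = W n a0}"]) auto
    thus ?thesis unfolding sel_def by (rule someI_ex)
  qed
  define KK where "KK = rec_nat (sel UNIV 0) (\<lambda>n Kn. sel Kn (Suc n))"
  have KK0: "KK 0 = sel UNIV 0" and KKS: "KK (Suc n) = sel (KK n) (Suc n)" for n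
    by (simp_all add: KK_def)
  have KKp: "infinite (KK n) \<and> (\<forall>k\<in>KK n. \<forall>k'\<in>KK n. W n k = W n k')" for n
  proof (induction n)
    case 0 show ?case using sel[of UNIV 0] infinite_UNIV_nat unfolding KK0 by blast
  next
    case (Suc n) show ?case using sel[of "KK n" "Suc n"] Suc unfolding KKS by blast
  qed
  have KKm: "KK n \<subseteq> KK m" if "m \<le> n" for m n
    by (rule lift_Suc_antimono_le[OF _ that]) (use sel[OF conjunct1[OF KKp]] in \<open>unfold KKS, blast\<close>)
  define b where "b j = f (SOME k. k \<in> KK (nat \<bar>j\<bar>)) j" for j
  have "\<exists>k\<ge>m. \<forall>j. \<bar>j\<bar> \<le> int n \<longrightarrow> b j = f k j" for n m
  proof -
    obtain k where k: "k \<in> KK n" "k \<ge> m"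
      using conjunct1[OF KKp[of n]] unfolding infinite_nat_iff_unbounded_le by blast
    have "b j = f k j" if "\<bar>j\<bar> \<le> int n" for j
    proof -
      have ne: "KK (nat \<bar>j\<bar>) \<noteq> {}" using KKp[of "nat \<bar>j\<bar>"] by auto
      have p: "(SOME k. k \<in> KK (nat \<bar>j\<bar>)) \<in> KK (nat \<bar>j\<bar>)"
        using ne by (simp add: some_in_eq)
      have "k \<in> KK (nat \<bar>j\<bar>)" proof -
        have "nat \<bar>j\<bar> \<le> n" using that by (simp add: nat_le_iff)
        thus ?thesis using KKm k(1) by blast
      qed
      hence "W (nat \<bar>j\<bar>) (SOME k. k \<in> KK (nat \<bar>j\<bar>)) = W (nat \<bar>j\<bar>) k"
        using conjunct2[OF KKp[of "nat \<bar>j\<bar>"]] p by blast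
      thus ?thesis unfolding b_def by (rule WE) simp
    qed
    thus ?thesis using k by blast
  qed
  thus ?thesis by blast
qed

lemma ne_shift:
  assumes "x \<in> natural_extension X"
  shows "(\<lambda>j. x (j + c)) \<in> natural_extension X"
  unfolding natural_extension_def
proof (intro CollectI allI)
  fix p :: int
  have "(\<lambda>i::nat. x (p + c + int i)) \<in> X" using assms unfolding natural_extension_def by blast
  moreover have "(\<lambda>i::nat. x (p + int i + c)) = (\<lambda>i::nat. x (p + c + int i))"
    by (simp add: algebra_simps)
  ultimately show "(\<lambda>i::nat. (\<lambda>j. x (j + c)) (p + int i)) \<in> X" by simp
qed

lemma ne_closed:
  assumes "seq_closed X"
    and "\<forall>n::nat. \<exists>x\<in>natural_extension X. \<forall>j. \<bar>j\<bar> \<le> int n \<longrightarrow> x j = z j"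
  shows "z \<in> natural_extension X"
  unfolding natural_extension_def
proof (intro CollectI allI)
  fix p :: int
  have "\<exists>y\<in>X. \<forall>i<n. y i = z (p + int i)" for n
  proof -
    obtain x where x: "x \<in> natural_extension X" "\<forall>j. \<bar>j\<bar> \<le> int (nat \<bar>p\<bar> + n) \<longrightarrow> x j = z j"
      using assms(2) by (elim allE[of _ "nat \<bar>p\<bar> + n"] bexE) blast
    have "(\<lambda>i::nat. x (p + int i)) \<in> X" using x(1) unfolding natural_extension_def by blast
    moreover have "\<forall>i<n. x (p + int i) = z (p + int i)"
    proof (intro allI impI)
      fix i assume "i < n"
      hence "\<bar>p + int i\<bar> \<le> int (nat \<bar>p\<bar> + n)"
        by simp
      thus "x (p + int i) = z (p + int i)" using x(2) by blast
    qed
    ultimately show ?thesis by (intro bexI[of _ "\<lambda>i. x (p + int i)"]) simp_all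
  qed
  hence H: "\<forall>n. \<exists>y\<in>X. \<forall>i<n. y i = z (p + int i)" by blast
  show "(\<lambda>i::nat. z (p + int i)) \<in> X"
    using assms(1)[unfolded seq_closed_def, rule_format, of "\<lambda>i. z (p + int i)"] H by simp
qed

lemma cond_equiv:
  "(\<forall>j<Suc n. c (int j - int n) = a (p - int n + int j)) \<longleftrightarrow>
   (\<forall>j. - int n \<le> j \<and> j \<le> 0 \<longrightarrow> c j = a (p + j))"
proof
  assume H: "\<forall>j<Suc n. c (int j - int n) = a (p - int n + int j)"
  show "\<forall>j. - int n \<le> j \<and> j \<le> 0 \<longrightarrow> c j = a (p + j)"
  proof (intro allI impI)
    fix j :: int assume j: "- int n \<le> j \<and> j \<le> 0"
    have "nat (j + int n) < Suc n" using j by linarith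
    from H[rule_format, OF this] show "c j = a (p + j)" using j by (simp add: algebra_simps)
  qed
next
  assume H: "\<forall>j. - int n \<le> j \<and> j \<le> 0 \<longrightarrow> c j = a (p + j)"
  show "\<forall>j<Suc n. c (int j - int n) = a (p - int n + int j)"
  proof (intro allI impI)
    fix j :: nat assume "j < Suc n"
    hence "- int n \<le> int j - int n \<and> int j - int n \<le> 0" by linarith
    from H[rule_format, OF this] show "c (int j - int n) = a (p - int n + int j)"
      by (simp add: algebra_simps)
  qed
qed

lemma fol_block:
  "y \<in> fol X (block a p n) \<longleftrightarrow>
   (\<exists>c\<in>natural_extension X. (\<forall>j. - int n \<le> j \<and> j \<le> 0 \<longrightarrow> c j = a (p + j)) \<and> y = (\<lambda>i. c (int i)))"
proof -
  have len: "length (block a p n) = Suc n" by (simp add: block_def)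
  have nth: "block a p n ! j = a (p - int n + int j)" if "j < Suc n" for j
    using that by (simp add: block_def del: upt_Suc)
  have "(\<forall>j<length (block a p n). c (int j - (int (length (block a p n)) - 1)) = block a p n ! j)
        \<longleftrightarrow> (\<forall>j. - int n \<le> j \<and> j \<le> 0 \<longrightarrow> c j = a (p + j))" for c
  proof -
    have "(\<forall>j<length (block a p n). c (int j - (int (length (block a p n)) - 1)) = block a p n ! j)
        \<longleftrightarrow> (\<forall>j<Suc n. c (int j - int n) = a (p - int n + int j))"
      unfolding len by (simp add: nth)
    thus ?thesis using cond_equiv[of n c a p] by simp
  qed
  thus ?thesis unfolding fol_def by blast
qed

definition spl :: "(int \<Rightarrow> 'a) \<Rightarrow> int \<Rightarrow> (nat \<Rightarrow> 'a) \<Rightarrow> int \<Rightarrow> 'a" where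
  "spl a p y j = (if j < p then a j else y (nat (j - p)))"

definition SS :: "(nat \<Rightarrow> 'a) set \<Rightarrow> (int \<Rightarrow> 'a) \<Rightarrow> int \<Rightarrow> (nat \<Rightarrow> 'a) set" where
  "SS X a p = {y. y 0 = a p \<and> spl a p y \<in> natural_extension X}"

lemma SS_sub_fol:
  assumes "y \<in> SS X a p"
  shows "y \<in> fol X (block a p n)"
  unfolding fol_block
proof (intro bexI conjI)
  show "(\<lambda>j. spl a p y (j + p)) \<in> natural_extension X"
    using assms ne_shift unfolding SS_def by blast
  show "\<forall>j. - int n \<le> j \<and> j \<le> 0 \<longrightarrow> spl a p y (j + p) = a (p + j)"
    using assms by (auto simp: SS_def spl_def algebra_simps)
  show "y = (\<lambda>i. spl a p y (int i + p))"
    by (auto simp: spl_def)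
qed

lemma fol_sub_SS:
  assumes cl: "seq_closed X"
    and mk: "\<forall>n\<ge>N. fol X (block a p n) = fol X (block a p N)"
    and y: "y \<in> fol X (block a p N)"
  shows "y \<in> SS X a p"
proof -
  have G: "\<exists>c\<in>natural_extension X. (\<forall>j. - int n \<le> j \<and> j \<le> 0 \<longrightarrow> c j = a (p + j)) \<and> y = (\<lambda>i. c (int i))"
    if "n \<ge> N" for n
  proof -
    have "y \<in> fol X (block a p n)" using mk[rule_format, OF that] y by simp
    thus ?thesis unfolding fol_block .
  qed
  obtain c0 where c0: "(\<forall>j. - int N \<le> j \<and> j \<le> 0 \<longrightarrow> c0 j = a (p + j))" "y = (\<lambda>i. c0 (int i))"
    using G[of N] by blast
  have y0: "y 0 = a p" using c0 by simp
  have "spl a p y \<in> natural_extension X"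
  proof (rule ne_closed[OF cl], intro allI)
    fix n :: nat
    obtain c where c: "c \<in> natural_extension X"
      "\<forall>j. - int (N + n + nat \<bar>p\<bar>) \<le> j \<and> j \<le> 0 \<longrightarrow> c j = a (p + j)" "y = (\<lambda>i. c (int i))"
      using G[of "N + n + nat \<bar>p\<bar>"] by auto
    have "(\<lambda>j. c (j + - p)) \<in> natural_extension X" using ne_shift[OF c(1)] .
    moreover have "\<forall>j. \<bar>j\<bar> \<le> int n \<longrightarrow> c (j + - p) = spl a p y j"
    proof (intro allI impI)
      fix j :: int assume j: "\<bar>j\<bar> \<le> int n"
      show "c (j + - p) = spl a p y j"
      proof (cases "j < p")
        case True
        have ip: "int (N + n + nat \<bar>p\<bar>) = int N + int n + \<bar>p\<bar>" by simp
        have "- int (N + n + nat \<bar>p\<bar>) \<le> j + - p \<and> j + - p \<le> 0"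
          unfolding ip using True j by (simp add: abs_le_iff) linarith
        from c(2)[rule_format, OF this] show ?thesis using True by (simp add: spl_def)
      next
        case False
        have "int (nat (j - p)) = j - p" using False by simp
        thus ?thesis using False unfolding c(3) spl_def by simp
      qed
    qed
    ultimately show "\<exists>x\<in>natural_extension X. \<forall>j. \<bar>j\<bar> \<le> int n \<longrightarrow> x j = spl a p y j"
      by (intro bexI[of _ "\<lambda>j. c (j + - p)"]) auto
  qed
  thus ?thesis using y0 by (simp add: SS_def)
qed


theorem proposition5p13:
  fixes X :: "(nat \<Rightarrow> 'a::finite) set"
  assumes "one_sided_subshift X"
    and "infinite (natural_extension X)"
    and "minimal_two_sided (natural_extension X)"
  shows "eventually_markov_part X = {}"
proof (rule ccontr)
  assume "eventually_markov_part X \<noteq> {}"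
  then obtain a where aNE: "a \<in> natural_extension X" and mk0: "eventually_markov_at X a 0"
    unfolding eventually_markov_part_def by blast
  from mk0 obtain N where mk: "\<forall>n\<ge>N. fol X (block a 0 n) = fol X (block a 0 N)"
    unfolding eventually_markov_at_def by blast
  have cl: "seq_closed X" using assms(1) unfolding one_sided_subshift_def by blast
  have minim: "\<exists>k. \<forall>j. \<bar>j\<bar> \<le> int n \<longrightarrow> x (j + k) = y j"
    if "x \<in> natural_extension X" "y \<in> natural_extension X" for x y n
    using assms(3) that unfolding minimal_two_sided_def by blast
  have S0: "SS X a 0 = fol X (block a 0 N)"
    using SS_sub_fol[of _ X a 0 N] fol_sub_SS[OF cl mk] by blast
  have "\<exists>t<0. \<forall>j. - int N \<le> j \<and> j \<le> 0 \<longrightarrow> a (t + j) = a j"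
  proof (rule ccontr)
    assume nocc: "\<not> (\<exists>t<0. \<forall>j. - int N \<le> j \<and> j \<le> 0 \<longrightarrow> a (t + j) = a j)"
    from cluster[of "\<lambda>k j. a (j - int k)"]
    obtain b where b: "\<forall>n m. \<exists>k\<ge>m. \<forall>j. \<bar>j\<bar> \<le> int n \<longrightarrow> b j = a (j - int k)"
      by auto
    have bNE: "b \<in> natural_extension X"
    proof (rule ne_closed[OF cl], intro allI)
      fix n :: nat
      obtain k where kk: "\<forall>j. \<bar>j\<bar> \<le> int n \<longrightarrow> b j = a (j - int k)" using b by blast
      have "(\<lambda>j. a (j + - int k)) \<in> natural_extension X" using ne_shift[OF aNE] .
      thus "\<exists>x\<in>natural_extension X. \<forall>j. \<bar>j\<bar> \<le> int n \<longrightarrow> x j = b j"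
        using kk by (intro bexI[of _ "\<lambda>j. a (j + - int k)"]) auto
    qed
    obtain k where k: "\<forall>j. \<bar>j\<bar> \<le> int N \<longrightarrow> b (j + k) = a j"
      using minim[OF bNE aNE] by blast
    obtain k' where k': "k' \<ge> nat \<bar>k\<bar> + N + 1" "\<forall>j. \<bar>j\<bar> \<le> int (nat \<bar>k\<bar> + N) \<longrightarrow> b j = a (j - int k')"
      using b by blast
    have occ: "\<forall>j. - int N \<le> j \<and> j \<le> 0 \<longrightarrow> a ((k - int k') + j) = a j"
    proof (intro allI impI)
      fix j :: int assume j: "- int N \<le> j \<and> j \<le> 0"
      have e: "int (nat \<bar>k\<bar> + N) = \<bar>k\<bar> + int N" by simp
      have "\<bar>j + k\<bar> \<le> int (nat \<bar>k\<bar> + N)" unfolding e using j by (simp add: abs_le_iff) linarith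
      hence "b (j + k) = a (j + k - int k')" using k'(2) by blast
      moreover have "\<bar>j\<bar> \<le> int N" using j by linarith
      hence "b (j + k) = a j" using k by blast
      ultimately show "a ((k - int k') + j) = a j" by (simp add: algebra_simps)
    qed
    moreover have "k - int k' < 0" using k'(1) by linarith
    ultimately show False using nocc by blast
  qed
  then obtain t where t: "t < 0" and occ: "\<forall>j. - int N \<le> j \<and> j \<le> 0 \<longrightarrow> a (t + j) = a j"
    by blast
  have at: "a t = a 0" using occ[rule_format, of 0] by simp
  have St: "SS X a t \<subseteq> SS X a 0"
  proof
    fix y assume "y \<in> SS X a t"
    hence "y \<in> fol X (block a t N)" by (rule SS_sub_fol)
    then obtain c where c: "c \<in> natural_extension X" "\<forall>j. - int N \<le> j \<and> j \<le> 0 \<longrightarrow> c j = a (t + j)"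
      "y = (\<lambda>i. c (int i))"
      unfolding fol_block by blast
    have "\<forall>j. - int N \<le> j \<and> j \<le> 0 \<longrightarrow> c j = a (0 + j)" using c(2) occ by simp
    hence "y \<in> fol X (block a 0 N)" unfolding fol_block using c(1,3) by (intro bexI[of _ c]) simp_all
    thus "y \<in> SS X a 0" using S0 by simp
  qed
  define L where "L = nat (- t)"
  have L1: "L \<ge> 1" and Lt: "int L = - t" using t by (auto simp: L_def)
  define \<Phi> where "\<Phi> y = (\<lambda>i. if i \<le> L then a (t + int i) else y (i - L))" for y :: "nat \<Rightarrow> 'a"
  have \<Phi>: "\<Phi> y \<in> SS X a 0" if y: "y \<in> SS X a 0" for y
  proof -
    have y0: "y 0 = a 0" using y by (simp add: SS_def)
    have "spl a t (\<Phi> y) = spl a 0 y"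
    proof
      fix j
      show "spl a t (\<Phi> y) j = spl a 0 y j"
      proof (cases "j < t")
        case True thus ?thesis using t by (simp add: spl_def)
      next
        case False
        show ?thesis
        proof (cases "j \<le> 0")
          case True
          have le: "nat (j - t) \<le> L" using True unfolding L_def by simp
          have "spl a t (\<Phi> y) j = a j" using False le by (simp add: spl_def \<Phi>_def)
          moreover have "spl a 0 y j = a j" using True y0 by (cases "j = 0") (simp_all add: spl_def)
          ultimately show ?thesis by simp
        next
          case False2: False
          have gt: "\<not> nat (j - t) \<le> L" using False2 t unfolding L_def by (subst nat_le_eq_zle) auto
          have eq: "nat (j - t) - L = nat j" using False2 t unfolding L_def by simp
          show ?thesis using False False2 gt eq by (simp add: spl_def \<Phi>_def)
        qed
      qed
    qed
    moreover have "\<Phi> y 0 = a t" by (simp add: \<Phi>_def)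
    ultimately have "\<Phi> y \<in> SS X a t" using y by (simp add: SS_def)
    thus ?thesis using St by blast
  qed
  define a0 where "a0 = (\<lambda>i::nat. a (int i))"
  have "spl a 0 a0 = a" by (auto simp: spl_def a0_def)
  hence a0: "a0 \<in> SS X a 0" using aNE by (simp add: SS_def a0_def)
  define ys where "ys m = (\<Phi> ^^ m) a0" for m
  have ysS: "ys m \<in> SS X a 0" for m
    by (induction m) (simp_all add: ys_def a0 \<Phi>)
  define z where "z j = a (t + j mod int L)" for j
  have zper: "z (j + int L * q) = z j" for j q
    by (simp add: z_def)
  have ysz: "ys m i = z (int i)" if "i \<le> m * L" for m i
    using that
  proof (induction m arbitrary: i)
    case 0
    thus ?case using at by (simp add: ys_def a0_def z_def)
  next
    case (Suc m)
    have ysS: "ys (Suc m) i = \<Phi> (ys m) i" by (simp add: ys_def)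
    show ?case
    proof (cases "i \<le> L")
      case True
      show ?thesis
      proof (cases "i = L")
        case True
        thus ?thesis using ysS at Lt by (simp add: \<Phi>_def z_def)
      next
        case False
        hence "int i mod int L = int i" using \<open>i \<le> L\<close> by simp
        thus ?thesis using ysS \<open>i \<le> L\<close> by (simp add: \<Phi>_def z_def)
      qed
    next
      case False
      have "i - L \<le> m * L" using Suc.prems False by simp
      hence "ys m (i - L) = z (int (i - L))" by (rule Suc.IH)
      also have "int (i - L) = int i + int L * (-1)" using False by simp
      also have "z \<dots> = z (int i)" by (rule zper)
      finally show ?thesis using ysS False by (simp add: \<Phi>_def)
    qed
  qed
  have zNE: "z \<in> natural_extension X"
  proof (rule ne_closed[OF cl], intro allI)
    fix n :: nat
    have xNE: "(\<lambda>j. spl a 0 (ys (2*n)) (j + int (n*L))) \<in> natural_extension X"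
      using ne_shift ysS[of "2*n"] unfolding SS_def by blast
    have "\<forall>j. \<bar>j\<bar> \<le> int n \<longrightarrow> spl a 0 (ys (2*n)) (j + int (n*L)) = z j"
    proof (intro allI impI)
      fix j :: int assume j: "\<bar>j\<bar> \<le> int n"
      have nL0: "n \<le> n * L" using L1 by (metis mult.right_neutral mult_le_mono2)
      have nL: "int n \<le> int (n * L)" using nL0 of_nat_le_iff by blast
      have nn: "0 \<le> j + int (n*L)" using j nL by linarith
      have bnd: "nat (j + int (n*L)) \<le> 2 * n * L" using j nL by linarith
      have "spl a 0 (ys (2*n)) (j + int (n*L)) = ys (2*n) (nat (j + int (n*L)))"
        using nn by (simp add: spl_def)
      also have "\<dots> = z (int (nat (j + int (n*L))))" using bnd by (intro ysz) (simp add: mult.assoc)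
      also have "int (nat (j + int (n*L))) = j + int L * int n" using nn by (simp add: mult.commute)
      also have "z \<dots> = z j" by (rule zper)
      finally show "spl a 0 (ys (2*n)) (j + int (n*L)) = z j" .
    qed
    thus "\<exists>x\<in>natural_extension X. \<forall>j. \<bar>j\<bar> \<le> int n \<longrightarrow> x j = z j"
      using xNE by (intro bexI[of _ "\<lambda>j. spl a 0 (ys (2*n)) (j + int (n*L))"]) simp_all
  qed
  have fin: "natural_extension X \<subseteq> (\<lambda>r. \<lambda>j. z (j + r)) ` {0..<int L}"
  proof
    fix y assume yNE: "y \<in> natural_extension X"
    show "y \<in> (\<lambda>r. \<lambda>j. z (j + r)) ` {0..<int L}"
    proof (rule ccontr)
      assume nin: "y \<notin> (\<lambda>r. \<lambda>j. z (j + r)) ` {0..<int L}"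
      have "\<forall>r\<in>{0..<int L}. \<exists>j. y j \<noteq> z (j + r)"
      proof
        fix r assume r: "r \<in> {0..<int L}"
        show "\<exists>j. y j \<noteq> z (j + r)"
        proof (rule ccontr)
          assume "\<not> (\<exists>j. y j \<noteq> z (j + r))"
          hence "y = (\<lambda>j. z (j + r))" by auto
          thus False using nin r by blast
        qed
      qed
      then obtain J where J: "\<forall>r\<in>{0..<int L}. y (J r) \<noteq> z (J r + r)" by metis
      define n where "n = Max ((\<lambda>r. nat \<bar>J r\<bar>) ` {0..<int L})"
      obtain k where k: "\<forall>j. \<bar>j\<bar> \<le> int n \<longrightarrow> z (j + k) = y j"
        using minim[OF zNE yNE] by blast
      define r where "r = k mod int L"
      have r: "r \<in> {0..<int L}" using L1 by (simp add: r_def)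
      have "nat \<bar>J r\<bar> \<le> n" unfolding n_def using r by (intro Max_ge) auto
      hence "\<bar>J r\<bar> \<le> int n" by linarith
      hence "z (J r + k) = y (J r)" using k by blast
      moreover have "z (J r + k) = z (J r + r)"
        unfolding z_def r_def by (simp add: mod_add_right_eq)
      ultimately have "y (J r) = z (J r + r)" by simp
      thus False using J r by blast
    qed
  qed
  have "finite (natural_extension X)" by (rule finite_subset[OF fin]) simp
  thus False using assms(2) by simp
qed

end
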